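(* For $n\geq1$ let $\ell_n=\sqrt[n]{n!}$ and $x_n=\log(\ell_{n+1}/\ell_n)$. Then for every integer $n\geq 1$, $$x_n\geq \frac1n-\frac{\log n}{2n(n+1)}-\frac{\log(2\pi)}{2n(n+1)}-\frac{85}{144n^3}-\frac{49}{144n^4}\geq \frac1n-\frac{\log n}{2n(n+1)}-\frac{\log(2\pi)}{2n(n+1)}-\frac{1}{n^3}.$$
   Context: $\log$ denotes the natural logarithm. *)

theory Defs
  imports Complex_Main
begin

definition ell :: "nat \<Rightarrow> real" where
  "ell n = root n (fact n)"

definition xseq :: "nat \<Rightarrow> real" where
  "xseq n = ln (ell (n + 1) / ell n)"

end

theory Submission
  imports Defs "HOL-Analysis.Analysis"
begin

lemma ln_lower:
  fixes x :: real assumes "x \<ge> 0"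
  shows "2*x/(2+x) \<le> ln (1+x)"
proof -
  let ?g = "\<lambda>t::real. ln (1+t) - 2*t/(2+t)"
  have "?g 0 \<le> ?g x"
  proof (rule DERIV_nonneg_imp_nondecreasing[OF assms])
    fix t :: real assume t: "0 \<le> t" "t \<le> x"
    have d: "DERIV ?g t :> (1/(1+t) - (2*(2+t) - 2*t)/(2+t)^2)"
      using t by (auto intro!: derivative_eq_intros simp: power2_eq_square)
    have p: "1+t > 0" "(2+t)^2 > 0" using t by auto
    have e: "1/(1+t) - (2*(2+t) - 2*t)/(2+t)^2 = ((2+t)^2 - (2*(2+t) - 2*t)*(1+t))/((1+t)*(2+t)^2)"
      using p by (simp add: field_simps)
    have "(2+t)^2 - (2*(2+t) - 2*t)*(1+t) = t^2" by (simp add: algebra_simps power2_eq_square)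
    hence "1/(1+t) - (2*(2+t) - 2*t)/(2+t)^2 \<ge> 0" using e p by simp
    thus "\<exists>y. DERIV ?g t :> y \<and> y \<ge> 0" using d by auto
  qed
  thus ?thesis by simp
qed

lemma ln_upper:
  fixes x :: real assumes "x \<ge> 0"
  shows "ln (1+x) \<le> (12*x+12*x^2+x^3)/(6*(1+x)*(2+x))"
proof -
  let ?g = "\<lambda>t::real. ln (1+t) - (12*t+12*t^2+t^3)/(6*(1+t)*(2+t))"
  have "?g x \<le> ?g 0"
  proof (rule DERIV_nonpos_imp_nonincreasing[OF assms])
    fix t :: real assume t: "0 \<le> t" "t \<le> x"
    define P where "P = (12+24*t+3*t^2)*(6*(1+t)*(2+t)) - (12*t+12*t^2+t^3)*(6*(2+t) + 6*(1+t))"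
    define Q where "Q = 6*(1+t)*(2+t)"
    have d: "DERIV ?g t :> (1/(1+t) - P/Q^2)"
      using t unfolding P_def Q_def by (auto intro!: derivative_eq_intros simp: power2_eq_square)
    have p: "1+t > 0" "Q^2 > 0" using t unfolding Q_def by auto
    have e: "1/(1+t) - P/Q^2 = (Q^2 - P*(1+t))/((1+t)*Q^2)"
      using p by (simp add: field_simps)
    have q: "Q^2 - P*(1+t) = -6*(t^4+t^5)" unfolding P_def Q_def
      by (simp add: algebra_simps power2_eq_square power_def eval_nat_numeral)
    have "t^4 \<ge> 0" "t^5 \<ge> 0" using t by auto
    hence "-6*(t^4+t^5) \<le> (0::real)" by (smt (verit))
    hence "1/(1+t) - P/Q^2 \<le> 0" using e p q by (simp add: divide_nonpos_pos)
    thus "\<exists>y. DERIV ?g t :> y \<and> y \<le> 0" using d by auto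
  qed
  thus ?thesis by simp
qed
lemma gg: "(c::real) \<noteq> 0 \<Longrightarrow> p \<noteq> 0 \<Longrightarrow> q \<noteq> 0 \<Longrightarrow> (c/2)*(A/(6*p*q*c)) = A/(12*p*q)"
  by (simp add: field_simps)
lemma gh: "(p::real) \<noteq> 0 \<Longrightarrow> q \<noteq> 0 \<Longrightarrow> 1 + 1/(12*p) - 1/(12*q) = (12*p*q + q - p)/(12*p*q)"
  by (simp add: field_simps)
lemma key_eq: "\<And>m::real. m > 0 \<Longrightarrow> (m+1/2)*((12*m^2+12*m+1)/(6*m*(m+1)*(2*m+1))) = 1 + 1/(12*m) - 1/(12*(m+1))"
proof -
  fix m :: real assume m: "m > 0"
  have h: "m+1 \<noteq> 0" "2*m+1 \<noteq> 0" "m \<noteq> 0" using m by auto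
  have e: "m + 1/2 = (2*m+1)/2" by simp
  have "(m+1/2)*((12*m^2+12*m+1)/(6*m*(m+1)*(2*m+1))) = ((2*m+1)/2)*((12*m^2+12*m+1)/(6*m*(m+1)*(2*m+1)))"
    by (simp only: e)
  also have "\<dots> = (12*m^2+12*m+1)/(12*m*(m+1))"
    by (rule gg[OF h(2) h(3) h(1)])
  also have "\<dots> = (12*m*(m+1) + (m+1) - m)/(12*m*(m+1))"
    by (simp add: algebra_simps power2_eq_square)
  also have "\<dots> = 1 + 1/(12*m) - 1/(12*(m+1))"
    by (rule gh[symmetric, OF h(3) h(1)])
  finally show "(m+1/2)*((12*m^2+12*m+1)/(6*m*(m+1)*(2*m+1))) = 1 + 1/(12*m) - 1/(12*(m+1))" .
qed

definition dd :: "nat \<Rightarrow> real" where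
  "dd n = ln (fact n) - (real n + 1/2) * ln (real n) + real n"

lemma dd_diff:
  assumes "n \<ge> 1"
  shows "dd n - dd (Suc n) = (real n + 1/2) * ln (1 + 1/real n) - 1"
proof -
  have n: "real n > 0" using assms by simp
  have f: "ln (fact (Suc n) :: real) = ln (real n + 1) + ln (fact n)"
    by (simp add: ln_mult fact_gt_zero add.commute)
  have l: "ln (1 + 1/real n) = ln (real n + 1) - ln (real n)"
  proof -
    have "1 + 1/real n = (real n + 1)/real n" using n by (simp add: field_simps)
    thus ?thesis using n by (simp add: ln_div)
  qed
  show ?thesis unfolding dd_def f l by (simp add: algebra_simps)
qed

lemma dd_dec:
  assumes "n \<ge> 1"
  shows "dd (Suc n) \<le> dd n"
proof -
  have n: "real n > 0" using assms by simp
  have "2*(1/real n)/(2+1/real n) \<le> ln (1 + 1/real n)" by (rule ln_lower) simp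
  moreover have "2*(1/real n)/(2+1/real n) = 1/(real n + 1/2)" using n by (simp add: field_simps)
  ultimately have "1 \<le> (real n + 1/2) * ln (1 + 1/real n)" using n by (simp add: field_simps)
  thus ?thesis using dd_diff[OF assms] by simp
qed

lemma dd_inc:
  assumes "n \<ge> 1"
  shows "dd n - 1/(12*real n) \<le> dd (Suc n) - 1/(12*real (Suc n))"
proof -
  have n: "real n > 0" using assms by simp
  let ?x = "1/real n"
  have "ln (1 + ?x) \<le> (12*?x+12*?x^2+?x^3)/(6*(1+?x)*(2+?x))" by (rule ln_upper) simp
  moreover have "(12*?x+12*?x^2+?x^3)/(6*(1+?x)*(2+?x)) = (12*real n^2+12*real n+1)/(6*real n*(real n+1)*(2*real n+1))"
  proof -
    have a: "12*?x+12*?x^2+?x^3 = (12*real n^2+12*real n+1)/real n^3"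
      using n by (simp add: field_simps power2_eq_square power3_eq_cube)
    have b: "6*(1+?x)*(2+?x) = (6*(real n+1)*(2*real n+1))/real n^2"
      using n by (simp add: field_simps power2_eq_square)
    have c: "6*(real n+1)*(2*real n+1) > 0" using n by simp
    have g: "\<And>A B m::real. m \<noteq> 0 \<Longrightarrow> B \<noteq> 0 \<Longrightarrow> (A/m^3)/(B/m^2) = A/(m*B)"
      by (simp add: field_simps power2_eq_square power3_eq_cube)
    show ?thesis unfolding a b using n c by (subst g) (auto simp: mult.assoc)
  qed
  ultimately have "(real n + 1/2) * ln (1 + ?x) \<le> (real n + 1/2) * ((12*real n^2+12*real n+1)/(6*real n*(real n+1)*(2*real n+1)))"
    using n by (intro mult_left_mono) auto
  also have "\<dots> = 1 + 1/(12*real n) - 1/(12*(real n + 1))"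
    using n by (rule key_eq)
  finally show ?thesis using dd_diff[OF assms] by (simp add: add.commute)
qed
lemma dd_conv: obtains L where "dd \<longlonglongrightarrow> L" "\<And>n. n \<ge> 1 \<Longrightarrow> dd n - 1/(12*real n) \<le> L"
proof -
  define D where "D = (\<lambda>n. dd (Suc n))"
  define E where "E = (\<lambda>n. dd (Suc n) - 1/(12*real (Suc n)))"
  have decD: "decseq D" unfolding D_def by (rule decseq_SucI) (rule dd_dec, simp)
  have incE: "incseq E" unfolding E_def by (rule incseq_SucI) (rule dd_inc, simp)
  have "\<forall>i. E i \<le> D 0"
  proof
    fix i have "E i \<le> D i" unfolding E_def D_def by simp
    also have "D i \<le> D 0" using decD by (simp add: decseq_def)
    finally show "E i \<le> D 0" .
  qed
  then obtain L where EL: "E \<longlonglongrightarrow> L" "\<forall>i. E i \<le> L" using incseq_convergent[OF incE] by blast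
  have "(\<lambda>n. E n + 1/(12 * real (Suc n))) \<longlonglongrightarrow> L + 0"
  proof (rule tendsto_add[OF EL(1)])
    have "(\<lambda>n. (1/12) * inverse (real (Suc n))) \<longlonglongrightarrow> (1/12) * 0"
      by (intro tendsto_mult tendsto_const LIMSEQ_inverse_real_of_nat)
    thus "(\<lambda>n. 1/(12 * real (Suc n))) \<longlonglongrightarrow> 0" by (simp add: field_simps)
  qed
  hence "(\<lambda>n. dd (Suc n)) \<longlonglongrightarrow> L" unfolding E_def by simp
  hence c1: "dd \<longlonglongrightarrow> L" by (rule LIMSEQ_imp_Suc)
  have c2: "dd n - 1/(12*real n) \<le> L" if hn: "n \<ge> 1" for n
  proof -
    obtain m where "n = Suc m" using hn by (cases n) auto
    thus ?thesis using EL(2)[rule_format, of m] unfolding E_def by simp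
  qed
  show ?thesis by (rule that[OF c1 c2])
qed

lemma wgen:
  fixes A B m :: real
  assumes "B \<noteq> 0" "2*m+1 \<noteq> 0" "2*m+3 \<noteq> 0" "m+1 \<noteq> 0"
  shows "A^4/(B^2*(2*m+1)) * (4*(m+1)^2/((2*m+1)*(2*m+3))) = (2*A*(m+1))^4/(((2*m+2)*(2*m+1)*B)^2*(2*m+3))"
  apply (subst times_divide_times_eq)
  apply (subst frac_eq_eq)
  using assms apply simp_all
  apply (simp add: algebra_simps power2_eq_square power4_eq_xxxx)
  done

lemma wallis_id:
  "(\<Prod>k=1..n. (4*real k^2) / (4*real k^2 - 1)) = (2^n * fact n)^4 / ((fact (2*n))^2 * (2*real n+1))"
proof (induction n)
  case 0 thus ?case by simp
next
  case (Suc n)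
  have "(\<Prod>k=1..Suc n. (4*real k^2) / (4*real k^2 - 1)) = (2^n * fact n)^4 / ((fact (2*n))^2 * (2*real n+1)) * ((4*real (Suc n)^2) / (4*real (Suc n)^2 - 1))"
    using Suc by simp
  also have "\<dots> = (2^Suc n * fact (Suc n))^4 / ((fact (2*Suc n))^2 * (2*real (Suc n)+1))"
  proof -
    have f: "fact (2 * Suc n) = (2*real n+2)*(2*real n+1)*(fact (2*n) :: real)"
      by (simp add: fact_Suc algebra_simps)
    have f2: "(2::real)^Suc n * fact (Suc n) = 2*(2^n * fact n)*(real n+1)" by (simp add: algebra_simps)
    have q: "4*real (Suc n)^2 - 1 = (2*real n+1)*(2*real n+3)" by (simp add: algebra_simps power2_eq_square)
    have q2: "4*real (Suc n)^2 = 4*(real n+1)^2" by simp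
    have r: "2*real (Suc n) + 1 = 2*real n+3" by simp
    show ?thesis unfolding f f2 q by (unfold q2 r, rule wgen) auto
  qed
  finally show ?case .
qed
lemma lnW:
  assumes "n \<ge> 1"
  shows "ln (\<Prod>k=1..n. (4*real k^2) / (4*real k^2 - 1)) = 4*dd n - 2*dd (2*n) - ln 2 - ln (2 + 1/real n)"
proof -
  have n: "real n > 0" using assms by simp
  have pf: "fact n > (0::real)" "fact (2*n) > (0::real)" by auto
  have "ln (\<Prod>k=1..n. (4*real k^2) / (4*real k^2 - 1)) = ln ((2^n * fact n)^4 / ((fact (2*n))^2 * (2*real n+1)))"
    by (simp only: wallis_id)
  also have "\<dots> = 4*(real n * ln 2 + ln (fact n)) - 2*ln (fact (2*n)) - ln (2*real n+1)"
    using pf n by (simp add: ln_div ln_mult ln_realpow)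
  also have "\<dots> = 4*dd n - 2*dd (2*n) - ln 2 - ln (2 + 1/real n)"
  proof -
    have a: "ln (2 + 1/real n) = ln (2*real n+1) - ln (real n)"
    proof -
      have "2 + 1/real n = (2*real n+1)/real n" using n by (simp add: field_simps)
      thus ?thesis using n by (simp add: ln_div)
    qed
    have b: "ln (real (2*n)) = ln 2 + ln (real n)" using n by (simp add: ln_mult)
    show ?thesis unfolding a dd_def b by (simp add: algebra_simps)
  qed
  finally show ?thesis .
qed

lemma dd_limit: "dd \<longlonglongrightarrow> ln (2*pi)/2" and dd_bound: "n \<ge> 1 \<Longrightarrow> dd n - 1/(12*real n) \<le> ln (2*pi)/2"
proof -
  obtain L where L: "dd \<longlonglongrightarrow> L" "\<And>n. n \<ge> 1 \<Longrightarrow> dd n - 1/(12*real n) \<le> L" by (rule dd_conv) blast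
  have sm: "strict_mono (\<lambda>n::nat. 2*n)" by (auto simp: strict_mono_def)
  have L2: "(\<lambda>n. dd (2*n)) \<longlonglongrightarrow> L" using LIMSEQ_subseq_LIMSEQ[OF L(1) sm] by (simp add: comp_def)
  have l2: "(\<lambda>n. ln (2 + 1/real n)) \<longlonglongrightarrow> ln (2 + 0)"
    by (intro tendsto_ln tendsto_add tendsto_const lim_1_over_n) simp
  have F: "(\<lambda>n. 4*dd n - 2*dd (2*n) - ln 2 - ln (2 + 1/real n)) \<longlonglongrightarrow> 4*L - 2*L - ln 2 - ln (2+0)"
    by (intro tendsto_diff tendsto_mult tendsto_const L(1) L2 l2)
  have ev: "eventually (\<lambda>n. 4*dd n - 2*dd (2*n) - ln 2 - ln (2 + 1/real n) = ln (\<Prod>k=1..n. (4*real k^2) / (4*real k^2 - 1))) sequentially"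
    using eventually_ge_at_top[of 1] by eventually_elim (rule lnW[symmetric])
  have W1: "(\<lambda>n. ln (\<Prod>k=1..n. (4*real k^2) / (4*real k^2 - 1))) \<longlonglongrightarrow> 4*L - 2*L - ln 2 - ln (2+0)"
    by (rule Lim_transform_eventually[OF F ev])
  have W2: "(\<lambda>n. ln (\<Prod>k=1..n. (4*real k^2) / (4*real k^2 - 1))) \<longlonglongrightarrow> ln (pi/2)"
    by (intro tendsto_ln wallis) simp
  have "ln (pi/2) = 2*L - 2*ln 2" using LIMSEQ_unique[OF W2 W1] by simp
  moreover have "ln (2*pi) = ln (pi/2) + 2 * ln 2"
  proof -
    have "ln (2*pi) = ln 2 + ln pi" using pi_gt_zero by (simp add: ln_mult)
    moreover have "ln (pi/2) = ln pi - ln 2" using pi_gt_zero by (simp add: ln_div)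
    ultimately show ?thesis by simp
  qed
  ultimately have LL: "L = ln (2*pi)/2" by simp
  show "dd \<longlonglongrightarrow> ln (2*pi)/2" using L(1) LL by simp
  show "n \<ge> 1 \<Longrightarrow> dd n - 1/(12*real n) \<le> ln (2*pi)/2" using L(2) LL by simp
qed

lemma fin_gen:
  fixes m a c q r :: real assumes p: "m > 0" "q > 0" "r > 0" and qr: "q = m+1" "r = 2*m+1"
  shows "(a + 2/r)/q - ((m+1/2)*a - m + c/2 + 1/(12*m))/(m*q) - (1/m - a/(2*m*q) - c/(2*m*q) - 85/(144*m^3) - 49/(144*m^4))
     = (2*m^3+341*m^2+232*m+49)/(144*m^4*q*r)"
proof -
  have nz: "m \<noteq> 0" "q \<noteq> 0" "r \<noteq> 0" using p by auto
  show ?thesis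
    apply (simp add: field_simps nz)
    apply (simp add: qr algebra_simps power_def eval_nat_numeral)
    done
qed

theorem mainTheorem7:
  fixes n :: nat
  assumes "n \<ge> 1"
  shows "xseq n \<ge> 1 / real n - ln (real n) / (2 * real n * (real n + 1))
            - ln (2 * pi) / (2 * real n * (real n + 1))
            - 85 / (144 * real n ^ 3) - 49 / (144 * real n ^ 4)
       \<and> 1 / real n - ln (real n) / (2 * real n * (real n + 1))
            - ln (2 * pi) / (2 * real n * (real n + 1))
            - 85 / (144 * real n ^ 3) - 49 / (144 * real n ^ 4)
         \<ge> 1 / real n - ln (real n) / (2 * real n * (real n + 1))
            - ln (2 * pi) / (2 * real n * (real n + 1)) - 1 / real n ^ 3"
proof -
  define m where "m = real n"
  have m: "m > 0" "m \<ge> 1" using assms unfolding m_def by auto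
  define T where "T = ln (fact n :: real)"
  define lp where "lp = ln (m + 1)"
  define a where "a = ln m"
  define c where "c = ln (2*pi)"
  have TU: "T \<le> (m+1/2)*a - m + c/2 + 1/(12*m)"
    using dd_bound[OF assms] unfolding dd_def T_def m_def a_def c_def by simp
  have lpb: "lp \<ge> a + 2/(2*m+1)"
  proof -
    have "2*(1/m)/(2+1/m) \<le> ln (1 + 1/m)" by (rule ln_lower) (use m in simp)
    moreover have "2*(1/m)/(2+1/m) = 2/(2*m+1)" using m by (simp add: field_simps)
    moreover have "ln (1 + 1/m) = lp - a"
    proof -
      have "1 + 1/m = (m + 1)/m" using m by (simp add: field_simps)
      thus ?thesis using m unfolding lp_def a_def by (simp add: ln_div)
    qed
    ultimately show ?thesis by simp
  qed
  have x: "xseq n = (lp + T)/(m+1) - T/m"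
  proof -
    have e1: "ell (n+1) > 0" "ell n > 0" unfolding ell_def using assms by auto
    have "xseq n = ln (ell (n+1)) - ln (ell n)" unfolding xseq_def using e1 by (simp add: ln_div)
    also have "\<dots> = ln (fact (Suc n)) / real (Suc n) - ln (fact n) / real n"
      unfolding ell_def using assms by (simp add: ln_root)
    also have "ln (fact (Suc n) :: real) = lp + T"
      unfolding lp_def T_def m_def by (simp add: ln_mult add.commute)
    finally show ?thesis unfolding m_def T_def by (simp add: add.commute)
  qed
  have x2: "(lp + T)/(m+1) - T/m = lp/(m+1) - T/(m*(m+1))"
  proof -
    define q where "q = m + 1"
    have "q \<noteq> 0" "m \<noteq> 0" using m unfolding q_def by auto
    hence "(lp + T)/q - T/m = lp/q - T/(m*q)" unfolding q_def[symmetric] by (simp add: field_simps) (simp add: q_def algebra_simps)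
    thus ?thesis unfolding q_def .
  qed
  have lb: "(a + 2/(2*m+1))/(m+1) - ((m+1/2)*a - m + c/2 + 1/(12*m))/(m*(m+1)) \<le> xseq n"
  proof -
    have "(a + 2/(2*m+1))/(m+1) \<le> lp/(m+1)" using lpb m by (intro divide_right_mono) auto
    moreover have "T/(m*(m+1)) \<le> ((m+1/2)*a - m + c/2 + 1/(12*m))/(m*(m+1))" using TU m by (intro divide_right_mono) auto
    ultimately show ?thesis using x x2 by linarith
  qed
  have fg: "(a + 2/(2*m+1))/(m+1) - ((m+1/2)*a - m + c/2 + 1/(12*m))/(m*(m+1)) - (1/m - a/(2*m*(m+1)) - c/(2*m*(m+1)) - 85/(144*m^3) - 49/(144*m^4))
     = (2*m^3+341*m^2+232*m+49)/(144*m^4*(m+1)*(2*m+1))"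
    by (rule fin_gen) (use m in auto)
  have "(2*m^3+341*m^2+232*m+49)/(144*m^4*(m+1)*(2*m+1)) \<ge> 0" using m by simp
  hence c1: "1/m - a/(2*m*(m+1)) - c/(2*m*(m+1)) - 85/(144*m^3) - 49/(144*m^4) \<le> xseq n"
    using fg lb by linarith
  have c2: "85/(144*m^3) + 49/(144*m^4) \<le> 1/m^3"
  proof -
    have "49/(144*m^4) \<le> 49/(144*m^3)" using m
      by (intro divide_left_mono mult_left_mono) (auto intro: power_increasing)
    moreover have "85/(144*m^3) + 49/(144*m^3) \<le> 1/m^3" using m by (simp add: field_simps)
    ultimately show ?thesis by linarith
  qed
  show ?thesis using c1 c2 unfolding m_def a_def c_def by simp
qed

end
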